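(* Let $n\ge2$ and $(\mathbb G,\lVert\cdot\rVert_{\mathrm{sf}})$ be a sub-Finsler free-Carnot group of step 2 and rank $n$, $\mathbb G=\mathbb R^n\times\bigwedge^2(\mathbb R^n)$, with Carnot–Carathéodory distance $d_{\mathrm{cc}}$; fix an adequate scalar product with induced norm $\lVert\cdot\rVert_{\mathrm{eu}}$. There exists a constant $K_2>0$ such that for every $\varepsilon>0$, every $Z\in\bigwedge^2(\mathbb R^n)$ and every $n$-tuple $(g_0,\dots,g_{n-1})\in\mathbb G^n$ with $g_0=0_{\mathbb G}$ and $\mathrm{MinHeight}(\pi(g_1),\dots,\pi(g_{n-1}))\ge\varepsilon$, $$d_{\mathrm{cc}}(g_0,Z*g_{n-1})\le K_2\frac{\lVert Z\rVert_{\mathrm{eu}}}{\varepsilon}+\sum_{j=1}^{n-1}d_{\mathrm{cc}}(g_{j-1},g_j).$$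
   Context: Group law: $(x_1,Y_1)*(x_2,Y_2)=(x_1+x_2,Y_1+Y_2+\tfrac12x_1\wedge x_2)$, $v\wedge w=v\otimes w-w\otimes v$, elements $Z\in\bigwedge^2(\mathbb R^n)$ identified with $(0,Z)$; $\pi(x,Y)=x$. Sub-Finsler structure: a norm on $\mathbb R^n$ extended left-invariantly; horizontal curves from $0_{\mathbb G}$: $\gamma_u(t)=\int_0^tu+\tfrac12\int_0^t(\int_0^su)\wedge u(s)\,ds$, length $\int_0^1\lVert u\rVert_{\mathrm{sf}}$; $d_{\mathrm{cc}}$ is the infimum of lengths of horizontal curves joining two points. Adequate scalar product: $\mathbb R^n\perp\bigwedge^2(\mathbb R^n)$ and $\langle v_1\wedge w_1,v_2\wedge w_2\rangle=\langle v_1,v_2\rangle\langle w_1,w_2\rangle-\langle v_1,w_2\rangle\langle w_1,v_2\rangle$. $\mathrm{MinHeight}(a_1,\dots,a_m):=\min_j d_{\mathrm{eu}}(a_j,\mathrm{span}(a_1,\dots,\widehat a_j,\dots,a_m))$ ($\widehat a_j$ omitted), computed in $\mathbb R^n$ with the Euclidean norm. *)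

theory Defs
  imports "HOL-Analysis.Analysis"
begin

text \<open>Step-2 free Carnot group of rank n = CARD('n).
  R^n is real^'n; the exterior square is represented by antisymmetric matrices
  real^'n^'n, with v \<wedge> w = v \<otimes> w - w \<otimes> v.\<close>

type_synonym ('n) carnot = "(real^'n::finite) \<times> (real^'n^'n)"

definition wedge :: "real^('n::finite) \<Rightarrow> real^'n \<Rightarrow> real^'n^'n" where
  "wedge v w = (\<chi> i j. v$i * w$j - w$i * v$j)"

definition antisym_mat :: "real^('n::finite)^'n \<Rightarrow> bool" where
  "antisym_mat Y \<longleftrightarrow> transpose Y = - Y"

definition in_G :: "('n::finite) carnot \<Rightarrow> bool" where
  "in_G p \<longleftrightarrow> antisym_mat (snd p)"

definition gmult :: "('n::finite) carnot \<Rightarrow> 'n carnot \<Rightarrow> 'n carnot" where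
  "gmult p q = (fst p + fst q, snd p + snd q + (1/2) *\<^sub>R wedge (fst p) (fst q))"

definition gzero :: "('n::finite) carnot" where
  "gzero = (0, 0)"

definition proj :: "('n::finite) carnot \<Rightarrow> real^'n" where
  "proj p = fst p"

text \<open>Endpoint gamma_u(1) of the horizontal curve from the identity with control u.\<close>
definition hend :: "(real \<Rightarrow> real^('n::finite)) \<Rightarrow> 'n carnot" where
  "hend u = (integral {0..1} u,
             (1/2) *\<^sub>R integral {0..1} (\<lambda>s. wedge (integral {0..s} u) (u s)))"

definition is_norm :: "(real^'n \<Rightarrow> real) \<Rightarrow> bool" where
  "is_norm N \<longleftrightarrow> (\<forall>x. 0 \<le> N x) \<and> (\<forall>x. N x = 0 \<longleftrightarrow> x = 0)
     \<and> (\<forall>c x. N (c *\<^sub>R x) = \<bar>c\<bar> * N x) \<and> (\<forall>x y. N (x + y) \<le> N x + N y)"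

text \<open>Carnot-Caratheodory distance for the left-invariant sub-Finsler norm N:
  horizontal curves from p to q are p * gamma_u, with L^1 controls u on [0,1].\<close>
definition dcc :: "(real^('n::finite) \<Rightarrow> real) \<Rightarrow> 'n carnot \<Rightarrow> 'n carnot \<Rightarrow> real" where
  "dcc N p q = Inf {integral {0..1} (\<lambda>t. N (u t)) | u.
      u absolutely_integrable_on {0..1} \<and> gmult p (hend u) = q}"

text \<open>Adequate scalar products: the scalar product on R^n is
  <v,w> = (A v) . (A w) for an invertible matrix A (every scalar product arises so);
  on Lambda^2 the adequate one satisfies <v1^w1,v2^w2> = <v1,v2><w1,w2> - <v1,w2><w1,v2>,
  which in the matrix representation is half the Frobenius product of A M A^T and A N A^T.\<close>
definition eunorm :: "real^('n::finite)^'n \<Rightarrow> real^'n \<Rightarrow> real" where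
  "eunorm A v = norm (A *v v)"

definition eunorm2 :: "real^('n::finite)^'n \<Rightarrow> real^'n^'n \<Rightarrow> real" where
  "eunorm2 A M = norm (A ** M ** transpose A) / sqrt 2"

definition eudist_set :: "real^('n::finite)^'n \<Rightarrow> real^'n \<Rightarrow> (real^'n) set \<Rightarrow> real" where
  "eudist_set A v S = Inf {eunorm A (v - s) | s. s \<in> S}"

definition MinHeight :: "real^('n::finite)^'n \<Rightarrow> (nat \<Rightarrow> real^'n) \<Rightarrow> nat set \<Rightarrow> real" where
  "MinHeight A a I = Min {eudist_set A (a j) (span (a ` (I - {j}))) | j. j \<in> I}"

end

theory Submission
  imports Defs
begin


lemma wedge_add_left: "wedge (a + b) c = wedge a c + wedge b c"
  by (simp add: wedge_def vec_eq_iff algebra_simps)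
lemma wedge_add_right: "wedge a (b + c) = wedge a b + wedge a c"
  by (simp add: wedge_def vec_eq_iff algebra_simps)
lemma wedge_scale_left: "wedge (r *\<^sub>R a) c = r *\<^sub>R wedge a c"
  by (simp add: wedge_def vec_eq_iff algebra_simps)
lemma wedge_scale_right: "wedge a (r *\<^sub>R c) = r *\<^sub>R wedge a c"
  by (simp add: wedge_def vec_eq_iff algebra_simps)
lemma wedge_neg_left: "wedge (- a) c = - wedge a c"
  by (simp add: wedge_def vec_eq_iff algebra_simps)
lemma wedge_neg_right: "wedge a (- c) = - wedge a c"
  by (simp add: wedge_def vec_eq_iff algebra_simps)
lemma wedge_diff_right: "wedge a (b - c) = wedge a b - wedge a c"
  by (simp add: wedge_def vec_eq_iff algebra_simps)
lemma wedge_diff_left: "wedge (a - b) c = wedge a c - wedge b c"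
  by (simp add: wedge_def vec_eq_iff algebra_simps)
lemma wedge_zero[simp]: "wedge 0 c = 0" "wedge a 0 = 0"
  by (simp_all add: wedge_def vec_eq_iff)
lemma wedge_self[simp]: "wedge a a = 0"
  by (simp add: wedge_def vec_eq_iff)
lemma wedge_swap: "wedge b a = - wedge a b"
  by (simp add: wedge_def vec_eq_iff)
lemma wedge_sum_left: "finite S \<Longrightarrow> wedge (\<Sum>i\<in>S. f i) c = (\<Sum>i\<in>S. wedge (f i) c)"
  by (induction S rule: finite_induct) (auto simp: wedge_add_left)
lemma wedge_sum_right: "finite S \<Longrightarrow> wedge c (\<Sum>i\<in>S. f i) = (\<Sum>i\<in>S. wedge c (f i))"
  by (induction S rule: finite_induct) (auto simp: wedge_add_right)
lemma bilinear_wedge: "bilinear wedge"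
  unfolding bilinear_def
  by (auto intro!: linearI simp: wedge_add_left wedge_add_right wedge_scale_left wedge_scale_right)

lemma gmult_assoc: "gmult (gmult p q) r = gmult p (gmult q r)"
  by (simp add: gmult_def wedge_add_left wedge_add_right algebra_simps)

lemma gmult_central: "gmult (0, Z) g = (fst g, Z + snd g)"
  by (simp add: gmult_def)
lemma gmult_central': "gmult g (0, Z) = (fst g, Z + snd g)"
  by (simp add: gmult_def)

lemma gmult_conj: "gmult (gmult (w, 0) X) (- w, 0) = (fst X, snd X + wedge w (fst X))"
  by (simp add: gmult_def wedge_add_left wedge_neg_right wedge_swap[of "fst X" w] algebra_simps)

lemma gmult_gzero[simp]: "gmult gzero g = g" "gmult g gzero = g"
  by (simp_all add: gmult_def gzero_def)

definition ginv :: "('n::finite) carnot \<Rightarrow> 'n carnot" where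
  "ginv p = (- fst p, - snd p)"

lemma gmult_ginv: "gmult p (gmult (ginv p) q) = q"
proof -
  have "wedge (fst p) (- fst p + fst q) + wedge (- fst p) (fst q) = 0"
    by (simp add: wedge_add_right wedge_neg_left wedge_neg_right wedge_diff_right)
  then have "(1/2) *\<^sub>R wedge (- fst p) (fst q) + (1/2) *\<^sub>R wedge (fst p) (- fst p + fst q) = (0::real^'a^'a)"
    by (metis add.commute scaleR_right_distrib scaleR_zero_right)
  then show ?thesis
    by (simp add: gmult_def ginv_def algebra_simps)
qed

lemma transpose_add': "transpose (X + Y) = transpose X + transpose (Y::real^'n^'m)"
  unfolding transpose_def by (rule vec_eq_iff[THEN iffD2]) (simp add: vec_eq_iff)
lemma transpose_neg': "transpose (- X) = - transpose (X::real^'n^'m)"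
  unfolding transpose_def by (rule vec_eq_iff[THEN iffD2]) (simp add: vec_eq_iff)

lemma antisym_wedge: "antisym_mat (wedge a b)"
  unfolding antisym_mat_def wedge_def transpose_def by (simp add: vec_eq_iff)

lemma antisym_add: "antisym_mat X \<Longrightarrow> antisym_mat Y \<Longrightarrow> antisym_mat (X + Y)"
  unfolding antisym_mat_def by (simp add: transpose_add')
lemma antisym_scale: "antisym_mat X \<Longrightarrow> antisym_mat (r *\<^sub>R X)"
  unfolding antisym_mat_def by (simp add: transpose_scalar)
lemma antisym_neg: "antisym_mat X \<Longrightarrow> antisym_mat (- X)"
  unfolding antisym_mat_def by (simp add: transpose_neg')

lemma in_G_gmult: "in_G p \<Longrightarrow> in_G q \<Longrightarrow> in_G (gmult p q)"
  unfolding in_G_def gmult_def snd_conv by (intro antisym_add antisym_scale antisym_wedge)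
lemma in_G_ginv: "in_G p \<Longrightarrow> in_G (ginv p)"
  unfolding in_G_def ginv_def snd_conv by (rule antisym_neg)



lemma seminorm_sum_le:
  fixes N :: "'a::real_vector \<Rightarrow> real"
  assumes sub: "\<And>x y. N (x + y) \<le> N x + N y" and z: "N 0 = 0"
  shows "finite S \<Longrightarrow> N (\<Sum>i\<in>S. f i) \<le> (\<Sum>i\<in>S. N (f i))"
proof (induction S rule: finite_induct)
  case empty then show ?case by (simp add: z)
next
  case (insert a S)
  then show ?case using sub[of "f a" "sum f S"] by simp
qed

lemma seminorm_bound:
  fixes N :: "'a::euclidean_space \<Rightarrow> real"
  assumes hom: "\<And>c x. N (c *\<^sub>R x) = \<bar>c\<bar> * N x"
    and sub: "\<And>x y. N (x + y) \<le> N x + N y"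
  shows "\<exists>C>0. \<forall>x. N x \<le> C * norm x"
proof -
  have z: "N 0 = 0" using hom[of 0 0] by simp
  have nn: "N x \<ge> 0" for x
  proof -
    have "N 0 \<le> N x + N (- x)" using sub[of x "-x"] by simp
    moreover have "N (-x) = N x" using hom[of "-1" x] by simp
    ultimately show ?thesis using z by simp
  qed
  define C where "C = (\<Sum>b\<in>Basis. N b) + 1"
  have C0: "C > 0" unfolding C_def using nn by (simp add: add_nonneg_pos sum_nonneg)
  have "N x \<le> C * norm x" for x
  proof -
    have "N x = N (\<Sum>b\<in>Basis. (x \<bullet> b) *\<^sub>R b)" by (simp add: euclidean_representation)
    also have "\<dots> \<le> (\<Sum>b\<in>Basis. N ((x \<bullet> b) *\<^sub>R b))"
      by (rule seminorm_sum_le[OF sub z]) simp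
    also have "\<dots> = (\<Sum>b\<in>Basis. \<bar>x \<bullet> b\<bar> * N b)" by (simp add: hom)
    also have "\<dots> \<le> (\<Sum>b\<in>Basis. norm x * N b)"
      by (rule sum_mono) (simp add: Basis_le_norm mult_right_mono nn)
    also have "\<dots> = norm x * (\<Sum>b\<in>Basis. N b)" by (simp add: sum_distrib_left)
    also have "\<dots> \<le> C * norm x" unfolding C_def by (simp add: algebra_simps)
    finally show ?thesis .
  qed
  then show ?thesis using C0 by blast
qed

lemma is_norm_props:
  assumes "is_norm N"
  shows "\<And>x. N x \<ge> 0" "\<And>c x. N (c *\<^sub>R x) = \<bar>c\<bar> * N x" "\<And>x y. N (x + y) \<le> N x + N y"
    "N 0 = 0" "\<And>x. N (- x) = N x"
  using assms unfolding is_norm_def apply auto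
  by (metis abs_minus_cancel abs_one mult_cancel_right1 scaleR_minus1_left)

lemma is_norm_continuous:
  assumes "is_norm N"
  shows "continuous_on UNIV N"
proof -
  note P = is_norm_props[OF assms]
  obtain C where C: "C > 0" "\<And>x. N x \<le> C * norm x"
    using seminorm_bound[of N] P by blast
  have L: "\<bar>N x - N y\<bar> \<le> C * norm (x - y)" for x y
  proof -
    have "N x \<le> N y + N (x - y)" using P(3)[of y "x - y"] by simp
    moreover have "N y \<le> N x + N (y - x)" using P(3)[of x "y - x"] by simp
    moreover have "N (y - x) = N (x - y)" using P(5)[of "x - y"] by simp
    ultimately show ?thesis using C(2)[of "x - y"] by linarith
  qed
  show ?thesis
    unfolding continuous_on_iff
  proof (intro ballI allI impI)
    fix x and e :: real assume "e > 0"
    show "\<exists>d>0. \<forall>x'\<in>UNIV. dist x' x < d \<longrightarrow> dist (N x') (N x) < e"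
    proof (intro exI[of _ "e / C"] conjI ballI impI)
      show "e / C > 0" using \<open>e > 0\<close> C by simp
      fix y assume "dist y x < e / C"
      then have "C * norm (y - x) < e" using C by (simp add: dist_norm field_simps)
      then show "dist (N y) (N x) < e" using L[of y x] by (simp add: dist_real_def)
    qed
  qed
qed

lemma norm_comp_abs_int:
  assumes "is_norm N" and u: "u absolutely_integrable_on S" and S: "S \<in> sets lebesgue"
  shows "(\<lambda>t. N (u t)) absolutely_integrable_on S"
proof -
  note P = is_norm_props[OF assms(1)]
  obtain C where C: "C > 0" "\<And>x. N x \<le> C * norm x"
    using seminorm_bound[of N] P by blast
  have um: "u \<in> borel_measurable (lebesgue_on S)"
    using u S absolutely_integrable_measurable by blast
  have Nm: "N \<in> borel_measurable borel"
    using is_norm_continuous[OF assms(1)] borel_measurable_continuous_onI by blast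
  have m: "(\<lambda>t. N (u t)) \<in> borel_measurable (lebesgue_on S)"
    using measurable_compose[OF um Nm] by simp
  have "(\<lambda>t. C * norm (u t)) integrable_on S"
    using u by (simp add: absolutely_integrable_on_def integrable_on_mult_right)
  moreover have "norm (N (u t)) \<le> C * norm (u t)" for t
    using C(2)[of "u t"] P(1)[of "u t"] by simp
  ultimately show ?thesis
    by (intro measurable_bounded_by_integrable_imp_absolutely_integrable[OF m S]) auto
qed



lemma aff_scale:
  fixes f :: "real \<Rightarrow> 'b::real_normed_vector"
  assumes "(f has_integral I) {a..b}"
  shows "((\<lambda>s. 2 *\<^sub>R f (2 * s + c)) has_integral I) {(a - c)/2..(b - c)/2}"
proof -
  have "((\<lambda>x. f (2 *\<^sub>R x + c)) has_integral (I /\<^sub>R 2 ^ DIM(real))) (cbox ((a - c) /\<^sub>R 2) ((b - c) /\<^sub>R 2))"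
    using has_integral_affinity'[of f I a b 2 c] assms by simp
  then have "((\<lambda>x. f (2 * x + c)) has_integral (I /\<^sub>R 2)) {(a - c)/2..(b - c)/2}"
    by simp
  from has_integral_cmul[OF this, of 2] show ?thesis by simp
qed

lemma split_int:
  fixes F f g :: "real \<Rightarrow> 'b::banach"
  assumes F1: "\<And>t. 0 \<le> t \<Longrightarrow> t \<le> 1/2 \<Longrightarrow> F t = 2 *\<^sub>R f (2 * t)"
    and F2: "\<And>t. 1/2 < t \<Longrightarrow> t \<le> 1 \<Longrightarrow> F t = 2 *\<^sub>R g (2 * t - 1)"
  shows split_int1: "s \<le> 1/2 \<Longrightarrow> (f has_integral I) {0 .. 2 * s} \<Longrightarrow> (F has_integral I) {0..s}"
    and split_int2: "1/2 \<le> s \<Longrightarrow> s \<le> 1 \<Longrightarrow> (f has_integral I) {0..1} \<Longrightarrow> (g has_integral J) {0 .. 2 * s-1}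
       \<Longrightarrow> (F has_integral I + J) {0..s}"
proof -
  show P1: "(F has_integral I) {0..s}" if "s \<le> 1/2" "(f has_integral I) {0 .. 2 * s}" for s I
  proof -
    have "((\<lambda>t. 2 *\<^sub>R f (2 * t + 0)) has_integral I) {(0 - 0)/2..(2 * s - 0)/2}"
      by (rule aff_scale) (use that in simp)
    then have "((\<lambda>t. 2 *\<^sub>R f (2 * t)) has_integral I) {0..s}" by simp
    then show ?thesis
      by (subst has_integral_cong[where g = "\<lambda>t. 2 *\<^sub>R f (2 * t)"]) (use that F1 in auto)
  qed
  assume s: "1/2 \<le> s" and s1: "s \<le> 1" and fI: "(f has_integral I) {0..1}" and gJ: "(g has_integral J) {0 .. 2 * s-1}"
  have a: "(F has_integral I) {0..1/2}" using P1[of "1/2" I] fI by simp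
  have "((\<lambda>t. 2 *\<^sub>R g (2 * t + -1)) has_integral J) {(0 - -1)/2..(2 * s-1 - -1)/2}"
    by (rule aff_scale) (use gJ in simp)
  then have "((\<lambda>t. 2 *\<^sub>R g (2 * t - 1)) has_integral J) {1/2..s}" by simp
  then have b: "(F has_integral J) {1/2..s}"
    by (subst has_integral_spike_finite_eq[where S = "{1/2}" and g = "\<lambda>t. 2 *\<^sub>R g (2 * t - 1)"]) (use s1 in \<open>auto simp: F2\<close>)
  show "(F has_integral I + J) {0..s}"
    using has_integral_combine[of 0 "1/2" s F I J] s a b by simp
qed

definition cat :: "(real \<Rightarrow> real^'n) \<Rightarrow> (real \<Rightarrow> real^'n) \<Rightarrow> real \<Rightarrow> real^'n" where
  "cat u v t = (if t \<le> 1/2 then 2 *\<^sub>R u (2 * t) else 2 *\<^sub>R v (2 * t - 1))"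

lemma area_abs_int:
  fixes u :: "real \<Rightarrow> real^'n"
  assumes u: "u absolutely_integrable_on {0..1}"
  shows "(\<lambda>t. wedge (integral {0..t} u) (u t)) absolutely_integrable_on {0..1}"
proof -
  have ui: "u integrable_on {0..1}" using u absolutely_integrable_on_def by blast
  have c: "continuous_on {0..1} (\<lambda>t. integral {0..t} u)"
    by (rule indefinite_integral_continuous_1[OF ui])
  have m: "(\<lambda>t. integral {0..t} u) \<in> borel_measurable (lebesgue_on {0..1})"
    by (rule continuous_imp_measurable_on_sets_lebesgue[OF c]) simp
  have b: "bounded ((\<lambda>t. integral {0..t} u) ` {0..1})"
    by (rule compact_imp_bounded, rule compact_continuous_image[OF c]) simp
  show ?thesis
    by (rule absolutely_integrable_bounded_measurable_product[OF bilinear_wedge m _ b u]) simp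
qed

lemma linear_wedge_left: "linear (wedge a)"
  by (auto intro!: linearI simp: wedge_add_right wedge_scale_right)

lemma cat_props:
  fixes u v :: "real \<Rightarrow> real^'n"
  assumes u: "u absolutely_integrable_on {0..1}" and v: "v absolutely_integrable_on {0..1}"
  shows "cat u v absolutely_integrable_on {0..1}"
    and "hend (cat u v) = gmult (hend u) (hend v)"
    and "is_norm N \<Longrightarrow> integral {0..1} (\<lambda>t. N (cat u v t)) =
           integral {0..1} (\<lambda>t. N (u t)) + integral {0..1} (\<lambda>t. N (v t))"
proof -
  define U where "U = (\<lambda>t. integral {0..t} u)"
  define V where "V = (\<lambda>t. integral {0..t} v)"
  have ui: "u integrable_on {0..1}" and nui: "(\<lambda>t. norm (u t)) integrable_on {0..1}"
    using u absolutely_integrable_on_def by blast+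
  have vi: "v integrable_on {0..1}" and nvi: "(\<lambda>t. norm (v t)) integrable_on {0..1}"
    using v absolutely_integrable_on_def by blast+
  have Uh: "(u has_integral U x) {0..x}" if "x \<le> 1" for x
    unfolding U_def
    by (rule integrable_integral, rule integrable_on_subinterval[OF ui]) (use that in auto)
  have Vh: "(v has_integral V x) {0..x}" if "x \<le> 1" for x
    unfolding V_def
    by (rule integrable_integral, rule integrable_on_subinterval[OF vi]) (use that in auto)
  have C1: "cat u v t = 2 *\<^sub>R u (2 * t)" if "t \<le> 1/2" for t
    using that by (simp add: cat_def)
  have C2: "cat u v t = 2 *\<^sub>R v (2 * t - 1)" if "1/2 < t" for t
    using that by (simp add: cat_def)
  have catI1: "(cat u v has_integral U (2 * s)) {0..s}" if "s \<le> 1/2" for s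
    by (rule split_int1[of _ u v]) (use that C1 C2 Uh in auto)
  have catI2: "(cat u v has_integral U 1 + V (2 * s - 1)) {0..s}" if "1/2 \<le> s" "s \<le> 1" for s
    by (rule split_int2[of _ u v]) (use that C1 C2 Uh Vh in auto)
  have catI: "(cat u v has_integral U 1 + V 1) {0..1}"
    using catI2[of 1] by simp
  have ncat: "((\<lambda>t. norm (cat u v t)) has_integral integral {0..1} (\<lambda>t. norm (u t)) + integral {0..1} (\<lambda>t. norm (v t))) {0..1}"
    by (rule split_int2[of _ "\<lambda>t. norm (u t)" "\<lambda>t. norm (v t)"])
      (use nui nvi in \<open>auto simp: C1 C2\<close>)
  show "cat u v absolutely_integrable_on {0..1}"
    unfolding absolutely_integrable_on_def using catI ncat by blast
  show "integral {0..1} (\<lambda>t. N (cat u v t)) =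
           integral {0..1} (\<lambda>t. N (u t)) + integral {0..1} (\<lambda>t. N (v t))" if N: "is_norm N"
  proof -
    note P = is_norm_props[OF N]
    have Nu: "(\<lambda>t. N (u t)) integrable_on {0..1}" "(\<lambda>t. N (v t)) integrable_on {0..1}"
      using norm_comp_abs_int[OF N u] norm_comp_abs_int[OF N v] absolutely_integrable_on_def by auto
    have "((\<lambda>t. N (cat u v t)) has_integral integral {0..1} (\<lambda>t. N (u t)) + integral {0..1} (\<lambda>t. N (v t))) {0..1}"
      by (rule split_int2[of _ "\<lambda>t. N (u t)" "\<lambda>t. N (v t)"])
        (use Nu in \<open>auto simp: C1 C2 P(2)\<close>)
    then show ?thesis by (rule integral_unique)
  qed
  define gu where "gu = (\<lambda>t. wedge (U t) (u t))"
  define gv where "gv = (\<lambda>t. wedge (V t) (v t))"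
  have gui: "(gu has_integral integral {0..1} gu) {0..1}"
    using area_abs_int[OF u] unfolding gu_def U_def absolutely_integrable_on_def by blast
  have gvi: "(gv has_integral integral {0..1} gv) {0..1}"
    using area_abs_int[OF v] unfolding gv_def V_def absolutely_integrable_on_def by blast
  have bl: "bounded_linear (wedge (U 1))"
    using linear_wedge_left linear_conv_bounded_linear by blast
  have wv: "((\<lambda>t. wedge (U 1) (v t)) has_integral wedge (U 1) (V 1)) {0..1}"
    using has_integral_linear[OF Vh[of 1] bl] by (simp add: o_def)
  define G where "G = (\<lambda>s. wedge (integral {0..s} (cat u v)) (cat u v s))"
  have G1: "G t = 2 *\<^sub>R gu (2 * t)" if "0 \<le> t" "t \<le> 1/2" for t
  proof -
    have "integral {0..t} (cat u v) = U (2 * t)" using catI1[of t] that integral_unique by blast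
    then show ?thesis using that by (simp add: G_def gu_def C1 wedge_scale_right)
  qed
  have G2: "G t = 2 *\<^sub>R (wedge (U 1) (v (2 * t - 1)) + gv (2 * t - 1))" if "1/2 < t" "t \<le> 1" for t
  proof -
    have "integral {0..t} (cat u v) = U 1 + V (2 * t - 1)" using catI2[of t] that integral_unique by auto
    then show ?thesis using that by (simp add: G_def gv_def C2 wedge_scale_right wedge_add_left)
  qed
  have GI: "(G has_integral integral {0..1} gu + (wedge (U 1) (V 1) + integral {0..1} gv)) {0..1}"
    by (rule split_int2[of G gu "\<lambda>t. wedge (U 1) (v t) + gv t"])
      (use G1 G2 gui in \<open>auto intro: has_integral_add[OF wv gvi]\<close>)
  have hu: "hend u = (U 1, (1/2) *\<^sub>R integral {0..1} gu)"
    by (simp add: hend_def U_def gu_def)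
  have hv: "hend v = (V 1, (1/2) *\<^sub>R integral {0..1} gv)"
    by (simp add: hend_def V_def gv_def)
  have hc: "hend (cat u v) = (U 1 + V 1, (1/2) *\<^sub>R (integral {0..1} gu + (wedge (U 1) (V 1) + integral {0..1} gv)))"
    unfolding hend_def using integral_unique[OF catI] integral_unique[OF GI] by (simp add: G_def)
  show "hend (cat u v) = gmult (hend u) (hend v)"
    by (simp add: hc hu hv gmult_def algebra_simps)
qed



definition reach :: "(real^('n::finite) \<Rightarrow> real) \<Rightarrow> 'n carnot \<Rightarrow> real \<Rightarrow> bool" where
  "reach N h L \<longleftrightarrow> (\<exists>u. u absolutely_integrable_on {0..1} \<and> hend u = h \<and> integral {0..1} (\<lambda>t. N (u t)) \<le> L)"

lemma reach_mult:
  assumes "is_norm N" "reach N h1 L1" "reach N h2 L2"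
  shows "reach N (gmult h1 h2) (L1 + L2)"
proof -
  obtain u where u: "u absolutely_integrable_on {0..1}" "hend u = h1" "integral {0..1} (\<lambda>t. N (u t)) \<le> L1"
    using assms(2) reach_def by blast
  obtain v where v: "v absolutely_integrable_on {0..1}" "hend v = h2" "integral {0..1} (\<lambda>t. N (v t)) \<le> L2"
    using assms(3) reach_def by blast
  show ?thesis unfolding reach_def
    by (rule exI[of _ "cat u v"]) (use cat_props[OF u(1) v(1)] assms(1) u v in auto)
qed

lemma reach_mono: "reach N h L \<Longrightarrow> L \<le> L' \<Longrightarrow> reach N h L'"
  unfolding reach_def by force

lemma integral_nonneg_any:
  fixes f :: "real \<Rightarrow> real"
  assumes "\<And>x. 0 \<le> f x"
  shows "0 \<le> integral S f"
  by (metis assms integral_nonneg not_integrable_integral order_refl)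

lemma hend_const: "hend (\<lambda>t. v) = (v, 0)"
proof -
  have w: "wedge (integral {0..s} (\<lambda>t. v)) v = 0" for s :: real
  proof -
    obtain c where "integral {0..s} (\<lambda>t. v) = c *\<^sub>R v"
      using integral_const_real by blast
    then show ?thesis
      by (simp only: wedge_scale_left wedge_self scaleR_zero_right)
  qed
  show ?thesis unfolding hend_def w by simp
qed

lemma reach_const: "reach N (v, 0) (N v)"
  unfolding reach_def
  by (rule exI[of _ "\<lambda>t. v"]) (simp add: hend_const)

lemma dcc_le_reach:
  assumes "is_norm N" "reach N h L"
  shows "dcc N p (gmult p h) \<le> L"
proof -
  obtain u where u: "u absolutely_integrable_on {0..1}" "hend u = h" "integral {0..1} (\<lambda>t. N (u t)) \<le> L"
    using assms(2) reach_def by blast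
  have "dcc N p (gmult p h) \<le> integral {0..1} (\<lambda>t. N (u t))"
    unfolding dcc_def
    by (rule cInf_lower) (use u is_norm_props(1)[OF assms(1)] in \<open>auto intro!: integral_nonneg_any simp: bdd_below_def\<close>)
  then show ?thesis using u by linarith
qed

lemma reach_comm: "is_norm N \<Longrightarrow> reach N (0, wedge a b) (2 * N a + 2 * N b)"
proof -
  assume N: "is_norm N"
  have e: "gmult (gmult (gmult (a, 0) (b, 0)) (- a, 0)) (- b, 0) = (0, wedge a b)"
    by (simp add: gmult_def wedge_neg_right wedge_add_left wedge_swap[of b a] scaleR_left_distrib[symmetric])
  have "reach N (gmult (gmult (gmult (a, 0) (b, 0)) (- a, 0)) (- b, 0)) (((N a + N b) + N (-a)) + N (-b))"
    by (intro reach_mult reach_const N)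
  then show ?thesis using e is_norm_props(5)[OF N] by (simp add: algebra_simps)
qed

lemma reach_central_sum:
  assumes N: "is_norm N" and S: "finite S"
  shows "\<exists>L. reach N (0, \<Sum>i\<in>S. wedge (a i) (b i)) L"
  using S
proof (induction S rule: finite_induct)
  case empty
  then show ?case using reach_const[of N 0] by auto
next
  case (insert x S)
  then obtain L where L: "reach N (0, \<Sum>i\<in>S. wedge (a i) (b i)) L" by blast
  have "reach N (gmult (0, wedge (a x) (b x)) (0, \<Sum>i\<in>S. wedge (a i) (b i))) (2 * N (a x) + 2 * N (b x) + L)"
    by (intro reach_mult reach_comm N L)
  then show ?case using insert by (auto simp: gmult_def)
qed

lemma antisym_decomp:
  fixes Y :: "real^'n^'n"
  assumes "antisym_mat Y"
  shows "Y = (\<Sum>i\<in>UNIV. wedge (axis i 1) ((1/2) *\<^sub>R Y $ i))"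
proof -
  have a: "Y $ l $ k = - Y $ k $ l" for k l
  proof -
    have "(transpose Y) $ k $ l = (- Y) $ k $ l" using assms unfolding antisym_mat_def by simp
    then show ?thesis by (simp add: transpose_def)
  qed
  show ?thesis
  proof (rule vec_eq_iff[THEN iffD2], intro allI, rule vec_eq_iff[THEN iffD2], intro allI)
    fix k l
    have "(\<Sum>i\<in>UNIV. wedge (axis i 1) ((1/2) *\<^sub>R Y $ i)) $ k $ l
        = (\<Sum>i\<in>UNIV. (if k = i then (1/2) * Y $ i $ l else 0) - (if l = i then (1/2) * Y $ i $ k else 0))"
      unfolding sum_component by (intro sum.cong refl) (simp add: wedge_def axis_def)
    also have "\<dots> = (1/2) * Y $ k $ l - (1/2) * Y $ l $ k"
      unfolding sum_subtractf by simp
    also have "\<dots> = Y $ k $ l" using a[of k l] by simp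
    finally show "Y $ k $ l = (\<Sum>i\<in>UNIV. wedge (axis i 1) ((1/2) *\<^sub>R Y $ i)) $ k $ l" by simp
  qed
qed

lemma reach_all:
  assumes N: "is_norm N" and "antisym_mat Y"
  shows "\<exists>L. reach N (x, Y) L"
proof -
  obtain L where L: "reach N (0, Y) L"
    using reach_central_sum[OF N, of UNIV "\<lambda>i. axis i 1" "\<lambda>i. (1/2) *\<^sub>R Y $ i"]
      antisym_decomp[OF assms(2)] by auto
  have "reach N (gmult (x, 0) (0, Y)) (N x + L)"
    by (intro reach_mult reach_const N L)
  then show ?thesis by (auto simp: gmult_def)
qed



lemma wedge_mv: "wedge v w *v x = (w \<bullet> x) *\<^sub>R v - (v \<bullet> x) *\<^sub>R w"
  by (simp add: vec_eq_iff wedge_def matrix_vector_mult_def inner_vec_def sum_subtractf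
      sum_distrib_left algebra_simps)

lemma sum_mv: "(\<Sum>j\<in>S. W j) *v x = (\<Sum>j\<in>S. W j *v x)"
  by (induction S rule: infinite_finite_induct) (auto simp: matrix_vector_mult_add_rdistrib)

lemma mv_nth_inner: "(M *v x) $ i = M $ i \<bullet> (x::real^'n)"
  by (simp add: matrix_vector_mult_def inner_vec_def)

lemma norm_mv_le: "norm (M *v (x::real^'n)) \<le> real CARD('n) * (norm (M::real^'n^'n) * norm x)"
proof -
  have "norm (M *v x) \<le> (\<Sum>i\<in>UNIV. \<bar>(M *v x) $ i\<bar>)" by (rule norm_le_l1_cart)
  also have "\<dots> \<le> (\<Sum>i\<in>(UNIV::'n set). norm M * norm x)"
  proof (rule sum_mono)
    fix i
    have "\<bar>(M *v x) $ i\<bar> \<le> norm (M $ i) * norm x"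
      unfolding mv_nth_inner by (rule Cauchy_Schwarz_ineq2)
    also have "\<dots> \<le> norm M * norm x" by (rule mult_right_mono[OF Finite_Cartesian_Product.norm_nth_le norm_ge_zero])
    finally show "\<bar>(M *v x) $ i\<bar> \<le> norm M * norm x" .
  qed
  also have "\<dots> = real CARD('n) * (norm M * norm x)" by simp
  finally show ?thesis .
qed

lemma expansion:
  fixes a b :: "nat \<Rightarrow> real^'n" and \<nu> :: "real^'n"
  assumes I: "finite I" "card I + 1 = CARD('n)"
    and ab: "\<And>i j. i \<in> I \<Longrightarrow> j \<in> I \<Longrightarrow> a i \<bullet> b j = (if i = j then 1 else 0)"
    and anu: "\<And>i. i \<in> I \<Longrightarrow> a i \<bullet> \<nu> = 0"
    and bnu: "\<And>i. i \<in> I \<Longrightarrow> b i \<bullet> \<nu> = 0"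
    and nu: "\<nu> \<bullet> \<nu> = 1"
  shows "x = (\<Sum>j\<in>I. (a j \<bullet> x) *\<^sub>R b j) + (\<nu> \<bullet> x) *\<^sub>R \<nu>"
proof -
  define B where "B = insert \<nu> (b ` I)"
  have inj: "inj_on b I"
  proof (rule inj_onI)
    fix i j assume "i \<in> I" "j \<in> I" "b i = b j"
    then have "a i \<bullet> b i = a i \<bullet> b j" by simp
    then show "i = j" using ab[of i i] ab[of i j] \<open>i \<in> I\<close> \<open>j \<in> I\<close> by (auto split: if_splits)
  qed
  have nub: "\<nu> \<notin> b ` I"
  proof
    assume "\<nu> \<in> b ` I"
    then obtain j where "j \<in> I" "\<nu> = b j" by auto
    then show False using ab[of j j] anu[of j] by simp
  qed
  have fB: "finite B" using I(1) B_def by simp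
  have sumB: "(\<Sum>v\<in>B. c v *\<^sub>R v) = (\<Sum>j\<in>I. c (b j) *\<^sub>R b j) + c \<nu> *\<^sub>R \<nu>" for c
    unfolding B_def using I(1) nub inj by (simp add: sum.reindex)
  have coef_a: "a k \<bullet> ((\<Sum>j\<in>I. c j *\<^sub>R b j) + d *\<^sub>R \<nu>) = c k" if "k \<in> I" for c d k
  proof -
    have "a k \<bullet> ((\<Sum>j\<in>I. c j *\<^sub>R b j) + d *\<^sub>R \<nu>) = (\<Sum>j\<in>I. c j * (a k \<bullet> b j))"
      using anu[OF that] by (simp add: inner_add_right inner_sum_right)
    also have "\<dots> = (\<Sum>j\<in>I. if j = k then c j else 0)"
      by (rule sum.cong) (use ab that in auto)
    also have "\<dots> = c k" using that I(1) by simp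
    finally show ?thesis .
  qed
  have coef_nu: "\<nu> \<bullet> ((\<Sum>j\<in>I. c j *\<^sub>R b j) + d *\<^sub>R \<nu>) = d" for c d
  proof -
    have "\<nu> \<bullet> ((\<Sum>j\<in>I. c j *\<^sub>R b j) + d *\<^sub>R \<nu>) = (\<Sum>j\<in>I. c j * (\<nu> \<bullet> b j)) + d"
      using nu by (simp add: inner_add_right inner_sum_right)
    also have "(\<Sum>j\<in>I. c j * (\<nu> \<bullet> b j)) = 0"
      by (rule sum.neutral) (use bnu in \<open>auto simp: inner_commute\<close>)
    finally show ?thesis by simp
  qed
  have indep: "independent B"
  proof -
    have "\<not> dependent B"
    proof
      assume "dependent B"
      then obtain c where c: "\<exists>v\<in>B. c v \<noteq> 0" "(\<Sum>v\<in>B. c v *\<^sub>R v) = 0"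
        using dependent_finite[OF fB] by auto
      have z: "(\<Sum>j\<in>I. c (b j) *\<^sub>R b j) + c \<nu> *\<^sub>R \<nu> = 0" using c(2) sumB by simp
      have "c (b k) = 0" if "k \<in> I" for k
        using coef_a[OF that, of "\<lambda>j. c (b j)" "c \<nu>"] z by simp
      moreover have "c \<nu> = 0" using coef_nu[of "\<lambda>j. c (b j)" "c \<nu>"] z by simp
      ultimately show False using c(1) B_def by auto
    qed
    then show ?thesis by simp
  qed
  have cardB: "card B = dim (UNIV :: (real^'n) set)"
    using I nub inj by (simp add: B_def card_image)
  have "UNIV \<subseteq> span B"
    using card_eq_dim[of B UNIV] cardB fB indep by simp
  then have "x \<in> span B" by blast
  then obtain c where "x = (\<Sum>v\<in>B. c v *\<^sub>R v)"
    using span_finite[OF fB] by auto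
  then have x: "x = (\<Sum>j\<in>I. c (b j) *\<^sub>R b j) + c \<nu> *\<^sub>R \<nu>" using sumB by simp
  have "a j \<bullet> x = c (b j)" if "j \<in> I" for j using x coef_a[OF that] by simp
  moreover have "\<nu> \<bullet> x = c \<nu>" using x coef_nu by simp
  ultimately show ?thesis using x by (simp cong: sum.cong)
qed


lemma antisym_inner:
  assumes "transpose M = - (M::real^'n^'n)"
  shows "x \<bullet> (M *v y) = - (y \<bullet> (M *v x))"
proof -
  have a: "M $ j $ i = - M $ i $ j" for i j
  proof -
    have "(transpose M) $ i $ j = (- M) $ i $ j" using assms by simp
    then show ?thesis by (simp add: transpose_def)
  qed
  have "x \<bullet> (M *v y) = (\<Sum>i\<in>UNIV. \<Sum>j\<in>UNIV. x $ i * M $ i $ j * y $ j)"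
    by (simp add: inner_vec_def matrix_vector_mult_def sum_distrib_left mult.assoc)
  also have "\<dots> = (\<Sum>j\<in>UNIV. \<Sum>i\<in>UNIV. x $ i * M $ i $ j * y $ j)"
    by (rule sum.swap)
  also have "\<dots> = - (\<Sum>j\<in>UNIV. \<Sum>i\<in>UNIV. y $ j * M $ j $ i * x $ i)"
  proof -
    have "x $ i * M $ i $ j * y $ j = - (y $ j * M $ j $ i * x $ i)" for i j
      using a[of i j] by simp
    then show ?thesis by (simp add: sum_negf)
  qed
  also have "\<dots> = - (y \<bullet> (M *v x))"
    by (simp add: inner_vec_def matrix_vector_mult_def sum_distrib_left mult.assoc)
  finally show ?thesis .
qed


lemma mv_lin_expand:
  fixes P :: "real^'n^'n"
  shows "P *v ((\<Sum>k\<in>I. c k *\<^sub>R d k) + e *\<^sub>R \<nu>) = (\<Sum>k\<in>I. c k *\<^sub>R (P *v d k)) + e *\<^sub>R (P *v \<nu>)"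
proof -
  have L: "linear (\<lambda>x. P *v x)" by simp
  show ?thesis
    by (simp add: linear_add[OF L] linear_sum[OF L] linear_scale[OF L])
qed

lemma eucl_decomp:
  fixes q :: "nat \<Rightarrow> real^'n" and M :: "real^'n^'n"
  assumes I: "finite I" "card I + 1 = CARD('n)" and ep: "\<epsilon> > 0"
    and H: "\<And>j t. j \<in> I \<Longrightarrow> t \<in> span (q ` (I - {j})) \<Longrightarrow> \<epsilon> \<le> norm (q j - t)"
    and MA: "transpose M = - M"
  shows "\<exists>w. M = (\<Sum>j\<in>I. wedge (w j) (q j)) \<and> (\<forall>j\<in>I. norm (w j) \<le> real CARD('n) * norm M / \<epsilon>)"
proof -
  have "\<forall>j\<in>I. \<exists>z. q j - z \<in> span (q ` (I - {j})) \<and> (\<forall>w\<in>span (q ` (I - {j})). z \<bullet> w = 0)"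
  proof
    fix j assume "j \<in> I"
    obtain y z where "y \<in> span (q ` (I - {j}))" "\<And>w. w \<in> span (q ` (I - {j})) \<Longrightarrow> orthogonal z w"
      "q j = y + z"
      using orthogonal_subspace_decomp_exists[of "q ` (I - {j})" "q j"] by blast
    then show "\<exists>z. q j - z \<in> span (q ` (I - {j})) \<and> (\<forall>w\<in>span (q ` (I - {j})). z \<bullet> w = 0)"
      by (intro exI[of _ z]) (auto simp: orthogonal_def)
  qed
  then obtain z where z: "\<And>j. j \<in> I \<Longrightarrow> q j - z j \<in> span (q ` (I - {j}))"
    "\<And>j w. j \<in> I \<Longrightarrow> w \<in> span (q ` (I - {j})) \<Longrightarrow> z j \<bullet> w = 0"
    by metis
  have zq: "z j \<bullet> q i = 0" if "j \<in> I" "i \<in> I" "i \<noteq> j" for i j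
    using z(2)[OF that(1)] that by (simp add: span_base)
  have zqj: "z j \<bullet> q j = z j \<bullet> z j" if "j \<in> I" for j
  proof -
    have "z j \<bullet> (q j - z j) = 0" using z that by blast
    then show ?thesis by (simp add: inner_diff_right)
  qed
  have zn: "\<epsilon> \<le> norm (z j)" if "j \<in> I" for j
    using H[OF that z(1)[OF that]] by simp
  have zz: "z j \<bullet> z j = (norm (z j))\<^sup>2" for j by (simp add: power2_norm_eq_inner)
  define d where "d j = (1 / (z j \<bullet> z j)) *\<^sub>R z j" for j
  have dq: "q i \<bullet> d j = (if i = j then 1 else 0)" if "i \<in> I" "j \<in> I" for i j
  proof -
    have pos: "z j \<bullet> z j > 0" using zn[OF that(2)] ep zz by (smt (verit) inner_gt_zero_iff norm_zero)
    show ?thesis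
      using zq[OF that(2) that(1)] zqj[OF that(2)] pos
      by (auto simp: d_def inner_commute)
  qed
  have dn: "norm (d j) \<le> 1 / \<epsilon>" if "j \<in> I" for j
  proof -
    have np: "norm (z j) > 0" using zn[OF that] ep by linarith
    have "norm (d j) = 1 / norm (z j)"
      using np by (simp add: d_def zz power2_eq_square)
    also have "\<dots> \<le> 1 / \<epsilon>" using zn[OF that] ep by (simp add: frac_le)
    finally show ?thesis .
  qed
  have "dim (q ` I) \<le> card (q ` I)"
    by (rule dim_le_card) (auto simp: span_base I(1))
  also have "\<dots> \<le> card I" by (rule card_image_le[OF I(1)])
  finally have "dim (q ` I) < DIM(real^'n)" using I(2) by simp
  then obtain x0 where x0: "x0 \<noteq> 0" "\<And>y. y \<in> span (q ` I) \<Longrightarrow> orthogonal x0 y"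
    using orthogonal_to_subspace_exists by blast
  define \<nu> where "\<nu> = (1 / norm x0) *\<^sub>R x0"
  have nunu: "\<nu> \<bullet> \<nu> = 1" using x0(1) by (simp add: \<nu>_def inner_commute dot_square_norm power2_eq_square)
  have nuspan: "y \<bullet> \<nu> = 0" if "y \<in> span (q ` I)" for y
    using x0(2)[OF that] by (simp add: \<nu>_def orthogonal_def inner_commute)
  have nuq: "q i \<bullet> \<nu> = 0" if "i \<in> I" for i
    by (rule nuspan) (simp add: span_base that)
  have nud: "d j \<bullet> \<nu> = 0" if "j \<in> I" for j
  proof -
    have "q j - z j \<in> span (q ` I)"
      using z(1)[OF that] span_mono[of "q ` (I - {j})" "q ` I"] by blast
    moreover have "q j \<in> span (q ` I)" using that by (simp add: span_base)
    ultimately have "q j - (q j - z j) \<in> span (q ` I)" using span_diff by blast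
    then have "z j \<bullet> \<nu> = 0" using nuspan by simp
    then show ?thesis by (simp add: d_def)
  qed
  have E1: "y = (\<Sum>j\<in>I. (q j \<bullet> y) *\<^sub>R d j) + (\<nu> \<bullet> y) *\<^sub>R \<nu>" for y
    by (rule expansion[OF I]) (use dq nuq nud nunu in auto)
  have E2: "y = (\<Sum>j\<in>I. (d j \<bullet> y) *\<^sub>R q j) + (\<nu> \<bullet> y) *\<^sub>R \<nu>" for y
    by (rule expansion[OF I]) (use dq nuq nud nunu in \<open>auto simp: inner_commute\<close>)
  define w where "w j = (1/2) *\<^sub>R (M *v d j) - ((1/2) * (d j \<bullet> (M *v \<nu>))) *\<^sub>R \<nu>" for j
  define M' where "M' = (\<Sum>j\<in>I. wedge (w j) (q j))"
  have M'v: "M' *v y = (\<Sum>j\<in>I. (q j \<bullet> y) *\<^sub>R w j - (w j \<bullet> y) *\<^sub>R q j)" for y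
    by (simp add: M'_def sum_mv wedge_mv)
  have AI: "a \<bullet> (M *v b) = - (b \<bullet> (M *v a))" for a b by (rule antisym_inner[OF MA])
  have wd: "w j \<bullet> d k = (1/2) * (d k \<bullet> (M *v d j))" if "j \<in> I" "k \<in> I" for j k
  proof -
    have "w j \<bullet> d k = (1/2) * ((M *v d j) \<bullet> d k) - ((1/2) * (d j \<bullet> (M *v \<nu>))) * (\<nu> \<bullet> d k)"
      by (simp add: w_def inner_diff_left)
    moreover have "\<nu> \<bullet> d k = 0" using nud[OF that(2)] by (simp add: inner_commute)
    ultimately show ?thesis by (simp add: inner_commute)
  qed
  have wnu: "w j \<bullet> \<nu> = - (d j \<bullet> (M *v \<nu>))" if "j \<in> I" for j
  proof -
    have "w j \<bullet> \<nu> = (1/2) * (\<nu> \<bullet> (M *v d j)) - (1/2) * (d j \<bullet> (M *v \<nu>))"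
      using nunu by (simp add: w_def inner_diff_left inner_commute[of "M *v d j" \<nu>])
    then show ?thesis using AI[of \<nu> "d j"] by simp
  qed
  have Md: "M' *v d k = M *v d k" if k: "k \<in> I" for k
  proof -
    define S where "S = (\<Sum>j\<in>I. (d j \<bullet> (M *v d k)) *\<^sub>R q j)"
    have S_eq: "S = M *v d k - (\<nu> \<bullet> (M *v d k)) *\<^sub>R \<nu>"
      using E2[of "M *v d k"] unfolding S_def by (simp add: algebra_simps)
    have s1: "(\<Sum>j\<in>I. (q j \<bullet> d k) *\<^sub>R w j) = w k"
    proof -
      have "(\<Sum>j\<in>I. (q j \<bullet> d k) *\<^sub>R w j) = (\<Sum>j\<in>I. if j = k then w j else 0)"
        by (rule sum.cong) (use dq k in auto)
      then show ?thesis using k I(1) by simp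
    qed
    have s2: "(\<Sum>j\<in>I. (w j \<bullet> d k) *\<^sub>R q j) = (- 1/2) *\<^sub>R S"
    proof -
      have "(\<Sum>j\<in>I. (w j \<bullet> d k) *\<^sub>R q j) = (\<Sum>j\<in>I. (- 1/2) *\<^sub>R ((d j \<bullet> (M *v d k)) *\<^sub>R q j))"
      proof (rule sum.cong[OF refl])
        fix j assume "j \<in> I"
        show "(w j \<bullet> d k) *\<^sub>R q j = (- 1/2) *\<^sub>R ((d j \<bullet> (M *v d k)) *\<^sub>R q j)"
          using wd[OF \<open>j \<in> I\<close> k] AI[of "d k" "d j"] by simp
      qed
      then show ?thesis unfolding S_def by (simp add: scaleR_sum_right)
    qed
    have "M' *v d k = w k - (- 1/2) *\<^sub>R S"
      unfolding M'v sum_subtractf s1 s2 by simp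
    also have "\<dots> = M *v d k"
      unfolding S_eq w_def using AI[of \<nu> "d k"] by (simp add: algebra_simps)
    finally show ?thesis .
  qed
  have Mnu: "M' *v \<nu> = M *v \<nu>"
  proof -
    have "M' *v \<nu> = (\<Sum>j\<in>I. (d j \<bullet> (M *v \<nu>)) *\<^sub>R q j)"
      unfolding M'v by (rule sum.cong) (use nuq wnu in \<open>auto simp: inner_commute\<close>)
    also have "\<dots> = M *v \<nu>"
      using E2[of "M *v \<nu>"] AI[of \<nu> \<nu>] by simp
    finally show ?thesis .
  qed
  have "M = M'"
  proof (rule matrix_eq[THEN iffD2], rule allI)
    fix y
    have "M *v y = M *v ((\<Sum>j\<in>I. (q j \<bullet> y) *\<^sub>R d j) + (\<nu> \<bullet> y) *\<^sub>R \<nu>)" using E1[of y] by simp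
    also have "\<dots> = (\<Sum>j\<in>I. (q j \<bullet> y) *\<^sub>R (M *v d j)) + (\<nu> \<bullet> y) *\<^sub>R (M *v \<nu>)"
      by (rule mv_lin_expand)
    also have "\<dots> = (\<Sum>j\<in>I. (q j \<bullet> y) *\<^sub>R (M' *v d j)) + (\<nu> \<bullet> y) *\<^sub>R (M' *v \<nu>)"
      using Md Mnu by simp
    also have "\<dots> = M' *v ((\<Sum>j\<in>I. (q j \<bullet> y) *\<^sub>R d j) + (\<nu> \<bullet> y) *\<^sub>R \<nu>)"
      by (rule mv_lin_expand[symmetric])
    also have "\<dots> = M' *v y" using E1[of y] by simp
    finally show "M *v y = M' *v y" .
  qed
  moreover have "norm (w j) \<le> real CARD('n) * norm M / \<epsilon>" if j: "j \<in> I" for j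
  proof -
    define C where "C = real CARD('n)"
    have nnu: "norm \<nu> = 1" using nunu by (simp add: norm_eq_sqrt_inner)
    have b1: "norm (M *v d j) \<le> C * (norm M * norm (d j))" unfolding C_def by (rule norm_mv_le)
    have "\<bar>d j \<bullet> (M *v \<nu>)\<bar> \<le> norm (d j) * norm (M *v \<nu>)" by (rule Cauchy_Schwarz_ineq2)
    also have "\<dots> \<le> norm (d j) * (C * (norm M * norm \<nu>))"
      unfolding C_def by (rule mult_left_mono[OF norm_mv_le norm_ge_zero])
    finally have b2: "\<bar>d j \<bullet> (M *v \<nu>)\<bar> \<le> C * (norm M * norm (d j))" using nnu by (simp add: algebra_simps)
    have "norm (w j) \<le> norm ((1/2) *\<^sub>R (M *v d j)) + norm (((1/2) * (d j \<bullet> (M *v \<nu>))) *\<^sub>R \<nu>)"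
      unfolding w_def by (rule norm_triangle_ineq4)
    also have "\<dots> = (1/2) * norm (M *v d j) + (1/2) * \<bar>d j \<bullet> (M *v \<nu>)\<bar>"
      using nnu by simp
    also have "\<dots> \<le> C * (norm M * norm (d j))" using b1 b2 by simp
    also have "\<dots> \<le> C * (norm M * (1 / \<epsilon>))"
      using dn[OF j] by (intro mult_left_mono) (auto simp: C_def)
    finally show ?thesis by (simp add: C_def)
  qed
  ultimately show ?thesis unfolding M'_def by blast
qed



lemma inner_transpose_mv: "b \<bullet> (transpose B *v x) = (B *v b) \<bullet> (x::real^'n)"
  for B :: "real^'n^'n"
proof -
  have "b \<bullet> (transpose B *v x) = (\<Sum>i\<in>UNIV. \<Sum>j\<in>UNIV. b $ i * B $ j $ i * x $ j)"
    by (simp add: inner_vec_def matrix_vector_mult_def transpose_def sum_distrib_left mult.assoc)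
  also have "\<dots> = (\<Sum>j\<in>UNIV. \<Sum>i\<in>UNIV. b $ i * B $ j $ i * x $ j)"
    by (rule sum.swap)
  also have "\<dots> = (\<Sum>j\<in>UNIV. (\<Sum>i\<in>UNIV. B $ j $ i * b $ i) * x $ j)"
    by (simp add: sum_distrib_left sum_distrib_right mult_ac)
  also have "\<dots> = (B *v b) \<bullet> x"
    by (simp add: inner_vec_def matrix_vector_mult_def)
  finally show ?thesis .
qed

lemma congr_wedge_sum:
  fixes B :: "real^'n^'n"
  shows "B ** (\<Sum>j\<in>I. wedge (a j) (b j)) ** transpose B = (\<Sum>j\<in>I. wedge (B *v a j) (B *v b j))"
proof (rule matrix_eq[THEN iffD2], rule allI)
  fix x
  define y where "y = transpose B *v x"
  have L: "linear (\<lambda>x. B *v x)" by simp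
  have "(B ** (\<Sum>j\<in>I. wedge (a j) (b j)) ** transpose B) *v x = B *v ((\<Sum>j\<in>I. wedge (a j) (b j)) *v y)"
    by (simp add: y_def matrix_vector_mul_assoc[symmetric])
  also have "\<dots> = B *v (\<Sum>j\<in>I. (b j \<bullet> y) *\<^sub>R a j - (a j \<bullet> y) *\<^sub>R b j)"
    by (simp add: sum_mv wedge_mv)
  also have "\<dots> = (\<Sum>j\<in>I. (b j \<bullet> y) *\<^sub>R (B *v a j) - (a j \<bullet> y) *\<^sub>R (B *v b j))"
    by (simp add: linear_sum[OF L] linear_diff[OF L] linear_scale[OF L])
  also have "\<dots> = (\<Sum>j\<in>I. ((B *v b j) \<bullet> x) *\<^sub>R (B *v a j) - ((B *v a j) \<bullet> x) *\<^sub>R (B *v b j))"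
    unfolding y_def inner_transpose_mv ..
  also have "\<dots> = (\<Sum>j\<in>I. wedge (B *v a j) (B *v b j)) *v x"
    by (simp add: sum_mv wedge_mv)
  finally show "(B ** (\<Sum>j\<in>I. wedge (a j) (b j)) ** transpose B) *v x = (\<Sum>j\<in>I. wedge (B *v a j) (B *v b j)) *v x" .
qed


lemma mm_neg: "(A::real^'n^'m) ** (- Z) = - (A ** (Z::real^'k^'n))" "(- Y) ** C = - ((Y::real^'n^'m) ** (C::real^'k^'n))"
  by (simp_all add: matrix_matrix_mult_def vec_eq_iff sum_negf)

lemma reach_chain:
  fixes g :: "nat \<Rightarrow> 'n::finite carnot" and u :: "nat \<Rightarrow> real \<Rightarrow> real^'n"
  assumes N: "is_norm N" and g0: "g 0 = gzero"
    and U: "\<And>j. 1 \<le> j \<Longrightarrow> j \<le> m \<Longrightarrow> u j absolutely_integrable_on {0..1} \<and> gmult (g (j - 1)) (hend (u j)) = g j"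
  shows "k \<le> m \<Longrightarrow> reach N (gmult (0, \<Sum>j\<in>{1..k}. wedge (w j) (fst (g j))) (g k))
            (\<Sum>j\<in>{1..k}. integral {0..1} (\<lambda>t. N (u j t)) + 2 * N (w j))"
proof (induction k)
  case 0
  have "reach N (0, 0) 0" using reach_const[of N 0] is_norm_props(4)[OF N] by simp
  then show ?case using g0 by (simp add: gmult_def gzero_def)
next
  case (Suc k)
  let ?Zk = "\<Sum>j\<in>{1..k}. wedge (w j) (fst (g j))"
  let ?X = "gmult (0, ?Zk) (g k)"
  have IH: "reach N ?X (\<Sum>j\<in>{1..k}. integral {0..1} (\<lambda>t. N (u j t)) + 2 * N (w j))"
    using Suc by simp
  have Uk: "u (Suc k) absolutely_integrable_on {0..1}" "gmult (g k) (hend (u (Suc k))) = g (Suc k)"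
    using U[of "Suc k"] Suc.prems by auto
  have ru: "reach N (hend (u (Suc k))) (integral {0..1} (\<lambda>t. N (u (Suc k) t)))"
    unfolding reach_def using Uk(1) by blast
  have r: "reach N (gmult (gmult (gmult (w (Suc k), 0) ?X) (hend (u (Suc k)))) (- w (Suc k), 0))
      (((N (w (Suc k)) + (\<Sum>j\<in>{1..k}. integral {0..1} (\<lambda>t. N (u j t)) + 2 * N (w j)))
         + integral {0..1} (\<lambda>t. N (u (Suc k) t))) + N (- w (Suc k)))"
    by (intro reach_mult N reach_const IH ru)
  have Y: "gmult ?X (hend (u (Suc k))) = (fst (g (Suc k)), ?Zk + snd (g (Suc k)))"
    unfolding gmult_assoc Uk(2) by (rule gmult_central)
  have e: "gmult (gmult (gmult (w (Suc k), 0) ?X) (hend (u (Suc k)))) (- w (Suc k), 0)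
      = gmult (0, \<Sum>j\<in>{1..Suc k}. wedge (w j) (fst (g j))) (g (Suc k))"
  proof -
    have "gmult (gmult (gmult (w (Suc k), 0) ?X) (hend (u (Suc k)))) (- w (Suc k), 0)
        = gmult (gmult (w (Suc k), 0) (gmult ?X (hend (u (Suc k))))) (- w (Suc k), 0)"
      by (simp only: gmult_assoc)
    also have "\<dots> = (fst (g (Suc k)), ?Zk + snd (g (Suc k)) + wedge (w (Suc k)) (fst (g (Suc k))))"
      unfolding Y gmult_conj by simp
    also have "\<dots> = gmult (0, \<Sum>j\<in>{1..Suc k}. wedge (w j) (fst (g j))) (g (Suc k))"
      unfolding gmult_central by (simp add: algebra_simps)
    finally show ?thesis .
  qed
  show ?case
    using r unfolding e by (simp add: is_norm_props(5)[OF N] algebra_simps)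
qed


theorem mainTheorem10:
  fixes N :: "real^'n \<Rightarrow> real" and A :: "real^'n^'n"
  assumes "CARD('n) \<ge> 2" and "is_norm N" and "invertible A"
  shows "\<exists>K2>0. \<forall>\<epsilon>>0. \<forall>(Z::real^'n^'n) (g::nat \<Rightarrow> 'n carnot).
           antisym_mat Z \<longrightarrow> (\<forall>j<CARD('n). in_G (g j)) \<longrightarrow> g 0 = gzero \<longrightarrow>
           MinHeight A (\<lambda>j. proj (g j)) {1..<CARD('n)} \<ge> \<epsilon> \<longrightarrow>
           dcc N (g 0) (gmult (0, Z) (g (CARD('n) - 1)))
             \<le> K2 * eunorm2 A Z / \<epsilon> + (\<Sum>j=1..CARD('n)-1. dcc N (g (j-1)) (g j))"
proof -
  note N = assms(2)
  note P = is_norm_props[OF N]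
  define n where "n = CARD('n)"
  define m where "m = n - 1"
  have n2: "n \<ge> 2" using assms(1) n_def by simp
  have nm: "n = Suc m" using n2 m_def by simp
  have m1: "m \<ge> 1" using n2 m_def by simp
  define I where "I = {1..<n}"
  have I_eq: "I = {1..m}" unfolding I_def nm by auto
  have fI: "finite I" and cI: "card I + 1 = CARD('n)" using n2 by (auto simp: I_def n_def)
  obtain B where AB: "A ** B = mat 1" and BA: "B ** A = mat 1"
    using assms(3) unfolding invertible_def by blast
  have hB: "N (B *v (c *\<^sub>R x)) = \<bar>c\<bar> * N (B *v x)" for c x
    by (simp add: matrix_vector_mult_scaleR P(2))
  have sB: "N (B *v (x + y)) \<le> N (B *v x) + N (B *v y)" for x y
    by (simp add: matrix_vector_right_distrib P(3))
  obtain C0 where C0: "C0 > 0" "\<And>x. N (B *v x) \<le> C0 * norm x"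
    using seminorm_bound[of "\<lambda>x. N (B *v x)"] hB sB by blast
  define K0 where "K0 = C0 * real m * real n * sqrt 2"
  have K0: "K0 > 0" using C0 m1 n2 by (simp add: K0_def)
  show ?thesis
  proof (intro exI[of _ "2 * K0"] conjI allI impI)
    show "0 < 2 * K0" using K0 by simp
    fix \<epsilon> :: real and Z :: "real^'n^'n" and g :: "nat \<Rightarrow> 'n carnot"
    assume ep: "\<epsilon> > 0" and Za: "antisym_mat Z" and G: "\<forall>j<CARD('n). in_G (g j)" and g0: "g 0 = gzero"
      and MH: "MinHeight A (\<lambda>j. proj (g j)) {1..<CARD('n)} \<ge> \<epsilon>"
    define p where "p j = fst (g j)" for j
    define q where "q j = A *v p j" for j
    have linA: "linear (\<lambda>x. A *v x)" by simp
    have H: "\<epsilon> \<le> norm (q j - t)" if j: "j \<in> I" and t: "t \<in> span (q ` (I - {j}))" for j t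
    proof -
      define E where "E = {eudist_set A (p k) (span (p ` (I - {k}))) | k. k \<in> I}"
      have fE: "finite E" unfolding E_def using fI by simp
      have "eudist_set A (p j) (span (p ` (I - {j}))) \<in> E" unfolding E_def using j by blast
      then have "Min E \<le> eudist_set A (p j) (span (p ` (I - {j})))" using fE by simp
      moreover have "Min E = MinHeight A (\<lambda>j. proj (g j)) {1..<CARD('n)}"
        unfolding E_def MinHeight_def I_def n_def p_def proj_def by simp
      ultimately have e1: "\<epsilon> \<le> eudist_set A (p j) (span (p ` (I - {j})))" using MH by linarith
      have "q ` (I - {j}) = (\<lambda>x. A *v x) ` (p ` (I - {j}))" unfolding q_def by auto
      then have "span (q ` (I - {j})) = (\<lambda>x. A *v x) ` span (p ` (I - {j}))"
        using span_linear_image[OF linA] by simp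
      then obtain s where s: "s \<in> span (p ` (I - {j}))" "t = A *v s" using t by auto
      have "eudist_set A (p j) (span (p ` (I - {j}))) \<le> eunorm A (p j - s)"
        unfolding eudist_set_def
        by (rule cInf_lower) (use s in \<open>auto intro!: bdd_belowI[of _ 0] simp: eunorm_def\<close>)
      also have "\<dots> = norm (q j - t)"
        by (simp add: eunorm_def q_def s(2) matrix_vector_mult_diff_distrib)
      finally show ?thesis using e1 by linarith
    qed
    define M where "M = A ** Z ** transpose A"
    have MA: "transpose M = - M"
    proof -
      have Zt: "transpose Z = - Z" using Za antisym_mat_def by blast
      have "transpose M = A ** transpose Z ** transpose A"
        by (simp add: M_def matrix_transpose_mul matrix_mul_assoc)
      also have "\<dots> = A ** (- Z) ** transpose A" using Zt by simp
      also have "\<dots> = - M"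
        by (simp add: M_def mm_neg)
      finally show ?thesis .
    qed
    obtain w' where w': "M = (\<Sum>j\<in>I. wedge (w' j) (q j))"
      "\<And>j. j \<in> I \<Longrightarrow> norm (w' j) \<le> real CARD('n) * norm M / \<epsilon>"
    proof -
      have "\<exists>w. M = (\<Sum>j\<in>I. wedge (w j) (q j)) \<and> (\<forall>j\<in>I. norm (w j) \<le> real CARD('n) * norm M / \<epsilon>)"
        by (rule eucl_decomp[OF fI cI ep _ MA]) (rule H)
      then show ?thesis using that by blast
    qed
    define w where "w j = B *v w' j" for j
    have Bq: "B *v q j = p j" for j
      by (simp add: q_def matrix_vector_mul_assoc BA)
    have Zdec: "Z = (\<Sum>j\<in>I. wedge (w j) (p j))"
    proof -
      have tBA: "transpose A ** transpose B = mat 1"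
        using BA by (metis matrix_transpose_mul transpose_mat)
      have "B ** M ** transpose B = (B ** A) ** Z ** (transpose A ** transpose B)"
        by (simp add: M_def matrix_mul_assoc)
      also have "\<dots> = Z" using BA tBA by simp
      finally have "Z = B ** M ** transpose B" by simp
      also have "\<dots> = (\<Sum>j\<in>I. wedge (B *v w' j) (B *v q j))"
        unfolding w'(1) by (rule congr_wedge_sum)
      finally show ?thesis by (simp add: w_def Bq)
    qed
    have normM: "norm M = sqrt 2 * eunorm2 A Z"
      by (simp add: eunorm2_def M_def)
    have wsum: "(\<Sum>j\<in>I. N (w j)) \<le> K0 * eunorm2 A Z / \<epsilon>"
    proof -
      have "(\<Sum>j\<in>I. N (w j)) \<le> (\<Sum>j\<in>I. C0 * (real CARD('n) * norm M / \<epsilon>))"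
      proof (rule sum_mono)
        fix j assume j: "j \<in> I"
        have "N (w j) \<le> C0 * norm (w' j)" unfolding w_def by (rule C0(2))
        also have "\<dots> \<le> C0 * (real CARD('n) * norm M / \<epsilon>)"
          using mult_left_mono[OF w'(2)[OF j], of C0] C0(1) by simp
        finally show "N (w j) \<le> C0 * (real CARD('n) * norm M / \<epsilon>)" .
      qed
      also have "\<dots> = K0 * eunorm2 A Z / \<epsilon>"
        using cI by (simp add: K0_def normM n_def m_def I_def)
      finally show ?thesis .
    qed
    define D where "D j = dcc N (g (j - 1)) (g j)" for j
    have near: "\<exists>v. v absolutely_integrable_on {0..1} \<and> gmult (g (j - 1)) (hend v) = g j
        \<and> integral {0..1} (\<lambda>t. N (v t)) < D j + \<delta>" if j: "1 \<le> j" "j \<le> m" and d: "\<delta> > 0" for j \<delta>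
    proof -
      define S where "S = {integral {0..1} (\<lambda>t. N (u t)) | u.
          u absolutely_integrable_on {0..1} \<and> gmult (g (j - 1)) (hend u) = g j}"
      have Gj: "in_G (g (j - 1))" "in_G (g j)" using G j nm n_def by auto
      obtain L where "reach N (gmult (ginv (g (j - 1))) (g j)) L"
        using reach_all[OF N, of "snd (gmult (ginv (g (j - 1))) (g j))" "fst (gmult (ginv (g (j - 1))) (g j))"]
          in_G_gmult[OF in_G_ginv[OF Gj(1)] Gj(2)] by (auto simp: in_G_def)
      then obtain u0 where u0: "u0 absolutely_integrable_on {0..1}" "hend u0 = gmult (ginv (g (j - 1))) (g j)"
        unfolding reach_def by blast
      have "gmult (g (j - 1)) (hend u0) = g j" unfolding u0(2) by (rule gmult_ginv)
      then have "integral {0..1} (\<lambda>t. N (u0 t)) \<in> S" unfolding S_def mem_Collect_eq using u0(1) by blast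
      then have Sne: "S \<noteq> {}" by blast
      have Sbd: "bdd_below S"
      proof (rule bdd_belowI[of _ 0])
        fix x assume "x \<in> S"
        then have "\<exists>v. x = integral {0..1} (\<lambda>t. N (v t)) \<and> v absolutely_integrable_on {0..1} \<and> gmult (g (j - 1)) (hend v) = g j"
          unfolding S_def mem_Collect_eq .
        then obtain v where "x = integral {0..1} (\<lambda>t. N (v t)) \<and> v absolutely_integrable_on {0..1} \<and> gmult (g (j - 1)) (hend v) = g j" ..
        then show "0 \<le> x" by (simp add: integral_nonneg_any P(1))
      qed
      have DS: "D j = Inf S" by (simp add: D_def dcc_def S_def)
      have "Inf S < D j + \<delta>" using d DS by simp
      then obtain x where x: "x \<in> S" "x < D j + \<delta>" using cInf_less_iff[OF Sne Sbd] by blast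
      from x(1) have "\<exists>v. x = integral {0..1} (\<lambda>t. N (v t)) \<and> v absolutely_integrable_on {0..1} \<and> gmult (g (j - 1)) (hend v) = g j"
        unfolding S_def mem_Collect_eq .
      then obtain v where v: "x = integral {0..1} (\<lambda>t. N (v t)) \<and> v absolutely_integrable_on {0..1} \<and> gmult (g (j - 1)) (hend v) = g j" ..
      show ?thesis
        by (rule exI[of _ v]) (use v x(2) in simp)
    qed
    show "dcc N (g 0) (gmult (0, Z) (g (CARD('n) - 1)))
             \<le> 2 * K0 * eunorm2 A Z / \<epsilon> + (\<Sum>j=1..CARD('n)-1. dcc N (g (j-1)) (g j))"
    proof (rule field_le_epsilon)
      fix \<delta> :: real assume d: "\<delta> > 0"
      have dm: "\<delta> / real m > 0" using d m1 by simp
      have "\<forall>j\<in>{1..m}. \<exists>v. v absolutely_integrable_on {0..1} \<and> gmult (g (j - 1)) (hend v) = g j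
        \<and> integral {0..1} (\<lambda>t. N (v t)) < D j + \<delta> / real m"
        using near[OF _ _ dm] by simp
      from bchoice[OF this] obtain u where u0: "\<forall>j\<in>{1..m}. u j absolutely_integrable_on {0..1} \<and> gmult (g (j - 1)) (hend (u j)) = g j
        \<and> integral {0..1} (\<lambda>t. N (u j t)) < D j + \<delta> / real m"
        by blast
      have u: "\<And>j. j \<in> {1..m} \<Longrightarrow> u j absolutely_integrable_on {0..1} \<and> gmult (g (j - 1)) (hend (u j)) = g j
        \<and> integral {0..1} (\<lambda>t. N (u j t)) < D j + \<delta> / real m"
        using u0 by blast
      have R: "reach N (gmult (0, \<Sum>j\<in>{1..m}. wedge (w j) (fst (g j))) (g m))
            (\<Sum>j\<in>{1..m}. integral {0..1} (\<lambda>t. N (u j t)) + 2 * N (w j))"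
        by (rule reach_chain[where N=N and g=g and m=m and u=u and k=m and w=w, OF N g0]) (use u in simp_all)
      have Zm: "(\<Sum>j\<in>{1..m}. wedge (w j) (fst (g j))) = Z"
        using Zdec I_eq by (simp add: p_def)
      have "dcc N (g 0) (gmult (0, Z) (g m)) \<le> (\<Sum>j\<in>{1..m}. integral {0..1} (\<lambda>t. N (u j t)) + 2 * N (w j))"
        using dcc_le_reach[OF N R, of gzero] Zm g0 by simp
      also have "\<dots> = (\<Sum>j\<in>{1..m}. integral {0..1} (\<lambda>t. N (u j t))) + 2 * (\<Sum>j\<in>I. N (w j))"
        by (simp add: sum.distrib sum_distrib_left I_eq)
      also have "\<dots> \<le> (\<Sum>j\<in>{1..m}. D j + \<delta> / real m) + 2 * (K0 * eunorm2 A Z / \<epsilon>)"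
      proof (rule add_mono)
        show "(\<Sum>j\<in>{1..m}. integral {0..1} (\<lambda>t. N (u j t))) \<le> (\<Sum>j\<in>{1..m}. D j + \<delta> / real m)"
          by (rule sum_mono) (use u in \<open>auto intro: less_imp_le\<close>)
        show "2 * (\<Sum>j\<in>I. N (w j)) \<le> 2 * (K0 * eunorm2 A Z / \<epsilon>)" using wsum by simp
      qed
      also have "\<dots> = (\<Sum>j\<in>{1..m}. D j) + \<delta> + 2 * K0 * eunorm2 A Z / \<epsilon>"
        using m1 by (simp add: sum.distrib)
      finally show "dcc N (g 0) (gmult (0, Z) (g (CARD('n) - 1)))
             \<le> 2 * K0 * eunorm2 A Z / \<epsilon> + (\<Sum>j=1..CARD('n)-1. dcc N (g (j-1)) (g j)) + \<delta>"
        by (simp add: D_def m_def n_def algebra_simps)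
    qed
  qed
qed


end
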